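(* Let $w$ be a word over $\{a^{\pm1},t^{\pm1},x^{\pm1}\}$ with $\sigma_x(w)=0$. Then $w=1$ has a solution in $L_2$ if and only if $\sigma_t(w)=0$ and there exists $\delta\in\mathbb{Z}$ such that $\mathrm{den}(w)_\delta$ divides $\mathrm{num}(w)_\delta$ in $\mathbb{Z}_2[z^{\pm1}]$.
   Context: $\mathbb{Z}_2$ is the field with two elements and $\mathbb{Z}_2[z^{\pm1}]$ the ring of Laurent polynomials over it. The lamplighter group $L_2$ is realized as the set $\mathbb{Z}\times\mathbb{Z}_2[z^{\pm1}]$ with multiplication $(\delta_1,f_1)(\delta_2,f_2)=(\delta_1+\delta_2,\ f_1z^{-\delta_2}+f_2)$, generated by $a=(0,1)$ and $t=(1,0)$. A solution of $w=1$ is an element $g\in L_2$ with $w(a,t,g)=1$, where $w(a,t,g)$ is the image of $w$ under the homomorphism $F(a,t,x)\to L_2$, $a\mapsto a$, $t\mapsto t$, $x\mapsto g$. $\sigma_x(w),\sigma_t(w)$ are the exponent sums of $x$ and $t$ in $w$. For Laurent polynomials $g,h$, "$g$ divides $h$" means $h=gq$ for some $q\in\mathbb{Z}_2[z^{\pm1}]$ (so $0$ divides only $0$). A $\delta$-parametric polynomial is a finite sum $\sum_{i=s}^{t} f_i(z)z^{i\delta}$ with $f_i\in\mathbb{Z}_2[z^{\pm1}]$ (formally an element of $\mathbb{Z}_2[z^{\pm1},y^{\pm1}]$ with $y$ standing for $z^\delta$); for an integer $\delta$, its instantiation (subscript $\delta$) is the Laurent polynomial obtained by substituting that integer for $\delta$.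 For a word $w$, the $\delta$-parametric polynomials $\mathrm{num}(w),\mathrm{den}(w)$ are defined recursively, reading $w$ from right to left: for the empty word both are $0$; if $w'=\ell w$ is obtained by prepending a letter $\ell$ to $w$, and $x_w=\sigma_x(w)$, $t_w=\sigma_t(w)$, then: if $\ell=x$, $\mathrm{den}(w')=\mathrm{den}(w)+z^{-t_w-x_w\delta}$ and $\mathrm{num}(w')=\mathrm{num}(w)$; if $\ell=x^{-1}$, $\mathrm{den}(w')=\mathrm{den}(w)+z^{-t_w-(x_w-1)\delta}$ and $\mathrm{num}(w')=\mathrm{num}(w)$; if $\ell=a^{\pm1}$, $\mathrm{num}(w')=\mathrm{num}(w)+z^{-t_w-x_w\delta}$ and $\mathrm{den}(w')=\mathrm{den}(w)$; if $\ell=t^{\pm1}$, both are unchanged. *)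

theory Defs
  imports "HOL-Computational_Algebra.Formal_Laurent_Series" "HOL-Library.Z2"
begin

definition laurent_poly :: "bit fls \<Rightarrow> bool" where
  "laurent_poly f \<longleftrightarrow> finite {n. fls_nth f n \<noteq> 0}"

abbreviation zpow :: "int \<Rightarrow> bit fls" where
  "zpow k \<equiv> fls_X_intpow k"

definition lp_dvd :: "bit fls \<Rightarrow> bit fls \<Rightarrow> bool" where
  "lp_dvd g h \<longleftrightarrow> (\<exists>q. laurent_poly q \<and> h = g * q)"

text \<open>Lamplighter group L_2 = Z x Z_2[z^{+-1}]\<close>
type_synonym lelem = "int \<times> bit fls"

definition in_L2 :: "lelem \<Rightarrow> bool" where
  "in_L2 p \<longleftrightarrow> laurent_poly (snd p)"

definition lmult :: "lelem \<Rightarrow> lelem \<Rightarrow> lelem" where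
  "lmult p q = (fst p + fst q, snd p * zpow (- fst q) + snd q)"

definition linv :: "lelem \<Rightarrow> lelem" where
  "linv p = (- fst p, snd p * zpow (fst p))"

definition lone :: lelem where "lone = (0, 0)"
definition gen_a :: lelem where "gen_a = (0, 1)"
definition gen_t :: lelem where "gen_t = (1, 0)"

datatype letter = A | Ai | T | Ti | X | Xi

type_synonym word = "letter list"

fun letter_val :: "lelem \<Rightarrow> letter \<Rightarrow> lelem" where
  "letter_val g A = gen_a"
| "letter_val g Ai = linv gen_a"
| "letter_val g T = gen_t"
| "letter_val g Ti = linv gen_t"
| "letter_val g X = g"
| "letter_val g Xi = linv g"

fun eval_word :: "lelem \<Rightarrow> word \<Rightarrow> lelem" where
  "eval_word g [] = lone"
| "eval_word g (l # w) = lmult (letter_val g l) (eval_word g w)"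

definition is_solution :: "word \<Rightarrow> lelem \<Rightarrow> bool" where
  "is_solution w g \<longleftrightarrow> in_L2 g \<and> eval_word g w = lone"

fun sigma_x :: "word \<Rightarrow> int" where
  "sigma_x [] = 0"
| "sigma_x (l # w) = (case l of X \<Rightarrow> 1 | Xi \<Rightarrow> -1 | _ \<Rightarrow> 0) + sigma_x w"

fun sigma_t :: "word \<Rightarrow> int" where
  "sigma_t [] = 0"
| "sigma_t (l # w) = (case l of T \<Rightarrow> 1 | Ti \<Rightarrow> -1 | _ \<Rightarrow> 0) + sigma_t w"

text \<open>Instantiations num(w)_d and den(w)_d of the d-parametric polynomials num(w), den(w)
  (the recursion is linear, so instantiation commutes with it).\<close>
fun num_inst :: "int \<Rightarrow> word \<Rightarrow> bit fls" where
  "num_inst d [] = 0"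
| "num_inst d (l # w) = num_inst d w +
     (if l = A \<or> l = Ai then zpow (- sigma_t w - sigma_x w * d) else 0)"

fun den_inst :: "int \<Rightarrow> word \<Rightarrow> bit fls" where
  "den_inst d [] = 0"
| "den_inst d (l # w) = den_inst d w +
     (if l = X then zpow (- sigma_t w - sigma_x w * d)
      else if l = Xi then zpow (- sigma_t w - (sigma_x w - 1) * d) else 0)"

end

theory Submission
  imports Defs
begin

lemma neg_fls_bit: "- (b::bit fls) = b"
  by (rule fls_eqI) simp

lemma zmul: "(f::bit fls) * zpow a * zpow b = f * zpow (a + b)"
  by (simp add: mult.assoc fls_X_intpow_times_fls_X_intpow)

lemma eval_formula:
  "eval_word (d, f) w = (sigma_t w + sigma_x w * d, num_inst d w + f * den_inst d w)"
proof (induction w)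
  case Nil
  then show ?case by (simp add: lone_def)
next
  case (Cons l w)
  show ?case
  proof (cases l)
    case A then show ?thesis using Cons
      by (simp add: lmult_def gen_a_def algebra_simps)
  next
    case Ai then show ?thesis using Cons
      by (simp add: lmult_def linv_def gen_a_def algebra_simps)
  next
    case T then show ?thesis using Cons
      by (simp add: lmult_def gen_t_def algebra_simps)
  next
    case Ti then show ?thesis using Cons
      by (simp add: lmult_def linv_def gen_t_def algebra_simps)
  next
    case X then show ?thesis using Cons
      by (simp add: lmult_def algebra_simps)
  next
    case Xi
    have h: "f * zpow d * zpow (- (sigma_t w + sigma_x w * d)) = f * zpow (- sigma_t w - (sigma_x w - 1) * d)"
      unfolding zmul by (simp add: algebra_simps)
    have "eval_word (d, f) (l # w) = (- d + (sigma_t w + sigma_x w * d),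
        f * zpow d * zpow (- (sigma_t w + sigma_x w * d)) + (num_inst d w + f * den_inst d w))"
      using Cons Xi by (simp only: eval_word.simps letter_val.simps lmult_def linv_def fst_conv snd_conv)
    then show ?thesis unfolding h using Xi
      by (simp add: algebra_simps)
  qed
qed

theorem mainTheorem7:
  fixes w :: word
  assumes "sigma_x w = 0"
  shows "(\<exists>g. is_solution w g) \<longleftrightarrow>
           (sigma_t w = 0 \<and> (\<exists>d::int. lp_dvd (den_inst d w) (num_inst d w)))"
proof
  assume "\<exists>g. is_solution w g"
  then obtain d f where s: "is_solution w (d, f)" by auto
  then have lp: "laurent_poly f" and e: "eval_word (d, f) w = lone"
    by (auto simp: is_solution_def in_L2_def)
  from e assms have t: "sigma_t w = 0" and n: "num_inst d w + f * den_inst d w = 0"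
    by (auto simp: eval_formula lone_def)
  from n have "num_inst d w = - (f * den_inst d w)" by (simp add: eq_neg_iff_add_eq_0)
  then have "num_inst d w = den_inst d w * f" by (simp add: neg_fls_bit mult.commute)
  with lp t show "sigma_t w = 0 \<and> (\<exists>d::int. lp_dvd (den_inst d w) (num_inst d w))"
    by (auto simp: lp_dvd_def)
next
  assume "sigma_t w = 0 \<and> (\<exists>d::int. lp_dvd (den_inst d w) (num_inst d w))"
  then obtain d q where t: "sigma_t w = 0" and lp: "laurent_poly q"
    and n: "num_inst d w = den_inst d w * q" by (auto simp: lp_dvd_def)
  have "num_inst d w + q * den_inst d w = - (q * den_inst d w) + q * den_inst d w"
    using n by (simp add: neg_fls_bit mult.commute)
  then have "num_inst d w + q * den_inst d w = 0" by simp
  then have "is_solution w (d, q)" using t assms lp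
    by (simp add: is_solution_def in_L2_def eval_formula lone_def)
  then show "\<exists>g. is_solution w g" by blast
qed

end
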